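(* Let $E\in M_n(\mathbb{FT})$ be idempotent ($E\otimes E=E$), let $H_E$ be the $\mathcal{H}$-class of $E$ in $M_n(\mathbb{FT})$, and let $\mathrm{Aut}(C(E))$ be the group of $\mathbb{FT}$-module automorphisms of $C(E)$. Let $E_1,\dots,E_n$ denote the columns of $E$. Define $\psi:\mathrm{Aut}(C(E))\to H_E$ by $\psi(f)=(f(E_1)\ \cdots\ f(E_n))$, the matrix whose $i$th column is $f(E_i)$. Then $\psi$ is a well-defined isomorphism of groups (where $H_E$ is a group under tropical matrix multiplication). Dually, $H_E$ is isomorphic to the group of $\mathbb{FT}$-module automorphisms of $R(E)$.
   Context: $\mathbb{FT}$ is $\mathbb{R}$ with $a\oplus b=\max(a,b)$, $a\otimes b=a+b$. $M_n(\mathbb{FT})$ is the semigroup of real $n\times n$ matrices under $(A\otimes B)_{i,j}=\max_k(A_{i,k}+B_{k,j})$. $\mathbb{FT}^n$ is an $\mathbb{FT}$-module under componentwise maximum and scaling $(\lambda\otimes x)_i=\lambda+x_i$; an $\mathbb{FT}$-module automorphism is a bijection preserving $\oplus$ and scaling. $C(A)$ (resp. $R(A)$) is the submodule of $\mathbb{FT}^n$ generated by the columns (resp. rows) of $A$, i.e. the set of all finite $\oplus$-combinations of scalings of them. Green's relations on a semigroup $S$ (with $S^1$ being $S$ with an identity adjoined): $a\,\mathcal{R}\,b$ iff $aS^1=bS^1$, $a\,\mathcal{L}\,b$ iff $S^1a=S^1b$, and $\mathcal{H}=\mathcal{L}\cap\mathcal{R}$. The $\mathcal H$-class of an idempotent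 is a group. *)

theory Defs
  imports Complex_Main "HOL-Algebra.Group" "HOL-Library.FuncSet"
begin

type_synonym 'n tvec = "'n \<Rightarrow> real"
type_synonym 'n tmat = "'n \<Rightarrow> 'n \<Rightarrow> real"

definition tmult :: "'n::finite tmat \<Rightarrow> 'n tmat \<Rightarrow> 'n tmat" where
  "tmult A B = (\<lambda>i j. Max (range (\<lambda>k. A i k + B k j)))"

definition tplus :: "'n tvec \<Rightarrow> 'n tvec \<Rightarrow> 'n tvec" where
  "tplus x y = (\<lambda>i. max (x i) (y i))"

definition tscale :: "real \<Rightarrow> 'n tvec \<Rightarrow> 'n tvec" where
  "tscale c x = (\<lambda>i. c + x i)"

definition col :: "'n tmat \<Rightarrow> 'n \<Rightarrow> 'n tvec" where
  "col A j = (\<lambda>i. A i j)"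

definition row :: "'n tmat \<Rightarrow> 'n \<Rightarrow> 'n tvec" where
  "row A i = A i"

inductive_set tspan :: "'n tvec set \<Rightarrow> 'n tvec set" for S where
  gen: "x \<in> S \<Longrightarrow> tscale c x \<in> tspan S"
| sup: "x \<in> tspan S \<Longrightarrow> y \<in> tspan S \<Longrightarrow> tplus x y \<in> tspan S"

definition colspace :: "'n tmat \<Rightarrow> 'n tvec set" where
  "colspace A = tspan (range (col A))"

definition rowspace :: "'n tmat \<Rightarrow> 'n tvec set" where
  "rowspace A = tspan (range (row A))"

definition tAut :: "'n tvec set \<Rightarrow> ('n tvec \<Rightarrow> 'n tvec) set" where
  "tAut M = {f. f \<in> extensional M \<and> bij_betw f M M
      \<and> (\<forall>x\<in>M. \<forall>y\<in>M. f (tplus x y) = tplus (f x) (f y))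
      \<and> (\<forall>c. \<forall>x\<in>M. f (tscale c x) = tscale c (f x))}"

definition AutGroup :: "'n tvec set \<Rightarrow> ('n tvec \<Rightarrow> 'n tvec) monoid" where
  "AutGroup M = \<lparr>carrier = tAut M, mult = (\<lambda>f g. compose M f g), one = restrict id M\<rparr>"

text \<open>Green's relations in the semigroup M_n(FT) (with identity adjoined).\<close>
definition greenR :: "'n::finite tmat \<Rightarrow> 'n tmat \<Rightarrow> bool" where
  "greenR A B \<longleftrightarrow> (A = B \<or> (\<exists>X. A = tmult B X)) \<and> (B = A \<or> (\<exists>Y. B = tmult A Y))"

definition greenL :: "'n::finite tmat \<Rightarrow> 'n tmat \<Rightarrow> bool" where
  "greenL A B \<longleftrightarrow> (A = B \<or> (\<exists>X. A = tmult X B)) \<and> (B = A \<or> (\<exists>Y. B = tmult Y A))"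

definition greenH :: "'n::finite tmat \<Rightarrow> 'n tmat \<Rightarrow> bool" where
  "greenH A B \<longleftrightarrow> greenR A B \<and> greenL A B"

definition Hclass :: "'n::finite tmat \<Rightarrow> 'n tmat set" where
  "Hclass E = {A. greenH A E}"

definition HGroup :: "'n::finite tmat \<Rightarrow> 'n tmat monoid" where
  "HGroup E = \<lparr>carrier = Hclass E, mult = tmult, one = E\<rparr>"

definition psi :: "'n tmat \<Rightarrow> ('n tvec \<Rightarrow> 'n tvec) \<Rightarrow> 'n tmat" where
  "psi E f = (\<lambda>i j. f (col E j) i)"

end

theory Submission imports Defs begin

lemma tmult_assoc: "tmult (tmult A B) C = tmult A (tmult B (C::'n::finite tmat))"
proof (rule ext, rule ext)
  fix i j
  have fin: "finite (UNIV::'n set)" "(UNIV::'n set) \<noteq> {}" by auto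
  show "tmult (tmult A B) C i j = tmult A (tmult B C) i j"
    unfolding tmult_def
  proof (rule antisym)
    show "Max (range (\<lambda>l. Max (range (\<lambda>k. A i k + B k l)) + C l j))
        \<le> Max (range (\<lambda>k. A i k + Max (range (\<lambda>l. B k l + C l j))))"
    proof (subst Max_le_iff, auto)
      fix l
      have "Max (range (\<lambda>k. A i k + B k l)) + C l j = Max (range (\<lambda>k. A i k + B k l + C l j))"
        using Max_add_commute[OF fin, of "\<lambda>k. A i k + B k l" "C l j"] by simp
      also have "\<dots> \<le> Max (range (\<lambda>k. A i k + Max (range (\<lambda>l. B k l + C l j))))"
      proof (subst Max_le_iff, auto)
        fix k
        have "B k l + C l j \<le> Max (range (\<lambda>l. B k l + C l j))" by (rule Max_ge[OF _ rangeI]) simp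
        hence "A i k + B k l + C l j \<le> A i k + Max (range (\<lambda>l. B k l + C l j))" by simp
        also have "\<dots> \<le> Max (range (\<lambda>k. A i k + Max (range (\<lambda>l. B k l + C l j))))" by (rule Max_ge[OF _ rangeI]) simp
        finally show "A i k + B k l + C l j \<le> Max (range (\<lambda>k. A i k + Max (range (\<lambda>l. B k l + C l j))))" .
      qed
      finally show "Max (range (\<lambda>k. A i k + B k l)) + C l j \<le> Max (range (\<lambda>k. A i k + Max (range (\<lambda>l. B k l + C l j))))" .
    qed
    show "Max (range (\<lambda>k. A i k + Max (range (\<lambda>l. B k l + C l j))))
        \<le> Max (range (\<lambda>l. Max (range (\<lambda>k. A i k + B k l)) + C l j))"
    proof (subst Max_le_iff, auto)
      fix k
      have "A i k + Max (range (\<lambda>l. B k l + C l j)) = Max (range (\<lambda>l. B k l + C l j + A i k))"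
        using Max_add_commute[OF fin, of "\<lambda>l. B k l + C l j" "A i k"] by simp
      also have "\<dots> \<le> Max (range (\<lambda>l. Max (range (\<lambda>k. A i k + B k l)) + C l j))"
      proof (subst Max_le_iff, auto)
        fix l
        have "A i k + B k l \<le> Max (range (\<lambda>k. A i k + B k l))" by (rule Max_ge[OF _ rangeI]) simp
        hence "B k l + C l j + A i k \<le> Max (range (\<lambda>k. A i k + B k l)) + C l j" by linarith
        also have "\<dots> \<le> Max (range (\<lambda>l. Max (range (\<lambda>k. A i k + B k l)) + C l j))" by (rule Max_ge[OF _ rangeI]) simp
        finally show "B k l + C l j + A i k \<le> Max (range (\<lambda>l. Max (range (\<lambda>k. A i k + B k l)) + C l j))" .
      qed
      finally show "A i k + Max (range (\<lambda>l. B k l + C l j)) \<le> Max (range (\<lambda>l. Max (range (\<lambda>k. A i k + B k l)) + C l j))" .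
    qed
  qed
qed

definition tmv :: "'n::finite tmat \<Rightarrow> 'n tvec \<Rightarrow> 'n tvec" where
  "tmv A x = (\<lambda>i. Max (range (\<lambda>k. A i k + x k)))"

definition comb :: "'k set \<Rightarrow> ('k \<Rightarrow> real) \<Rightarrow> ('k \<Rightarrow> 'n tvec) \<Rightarrow> 'n tvec" where
  "comb K c V = (\<lambda>i. Max ((\<lambda>k. c k + V k i) ` K))"

definition tr :: "'n tmat \<Rightarrow> 'n tmat" where "tr A = (\<lambda>i j. A j i)"

lemma col_tmult: "col (tmult A B) j = tmv A (col B j)"
  by (simp add: col_def tmult_def tmv_def)

lemma mat_eq_colI: "(\<And>j. col A j = col B j) \<Longrightarrow> A = B"
  unfolding col_def by (rule ext, rule ext) meson

lemma tmv_tmult: "tmv (tmult A B) x = tmv A (tmv B (x::'n::finite tvec))"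
proof -
  define X :: "'n tmat" where "X = (\<lambda>i j. x i)"
  obtain j :: 'n where True by simp
  have cX: "col X j = x" by (simp add: X_def col_def)
  have "tmv (tmult A B) x = col (tmult (tmult A B) X) j" by (simp add: col_tmult cX)
  also have "\<dots> = col (tmult A (tmult B X)) j" by (simp add: tmult_assoc)
  also have "\<dots> = tmv A (tmv B x)" by (simp add: col_tmult cX)
  finally show ?thesis .
qed

lemma tmv_comb: "tmv A x = comb UNIV x (col A)"
  by (simp add: tmv_def comb_def col_def add.commute)

lemma comb_single: "comb {k} c V = tscale (c k) (V k)"
  by (simp add: comb_def tscale_def)

lemma comb_insert: "finite K \<Longrightarrow> K \<noteq> {} \<Longrightarrow>
   comb (insert k K) c V = tplus (tscale (c k) (V k)) (comb K c V)"
  by (simp add: comb_def tscale_def tplus_def)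

lemma comb_in:
  assumes "finite K" "K \<noteq> {}" "V ` K \<subseteq> M"
    and "\<And>x y. x \<in> M \<Longrightarrow> y \<in> M \<Longrightarrow> tplus x y \<in> M"
    and "\<And>c x. x \<in> M \<Longrightarrow> tscale c x \<in> M"
  shows "comb K c V \<in> M"
  using assms(1,2,3)
proof (induction K rule: finite_ne_induct)
  case (singleton x) then show ?case by (simp add: comb_single assms(5))
next
  case (insert x F) then show ?case by (simp add: comb_insert assms(4,5))
qed

lemma f_comb:
  assumes "finite K" "K \<noteq> {}" "V ` K \<subseteq> M"
    and "\<And>x y. x \<in> M \<Longrightarrow> y \<in> M \<Longrightarrow> tplus x y \<in> M"
    and "\<And>c x. x \<in> M \<Longrightarrow> tscale c x \<in> M"
    and "\<forall>x\<in>M. \<forall>y\<in>M. f (tplus x y) = tplus (f x) (f y)"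
    and "\<forall>c. \<forall>x\<in>M. f (tscale c x) = tscale c (f x)"
  shows "f (comb K c V) = comb K c (f \<circ> V)"
  using assms(1,2,3)
proof (induction K rule: finite_ne_induct)
  case (singleton x) then show ?case by (simp add: comb_single assms(7))
next
  case (insert x F)
  have "comb F c V \<in> M" using insert by (intro comb_in[OF _ _ _ assms(4,5)]) auto
  then show ?case using insert by (simp add: comb_insert assms(5,6,7))
qed

lemma tscale_tscale: "tscale c (tscale d x) = tscale (c + d) x"
  by (simp add: tscale_def add.assoc)

lemma tscale_tplus: "tscale c (tplus x y) = tplus (tscale c x) (tscale c y)"
  by (auto simp: tscale_def tplus_def fun_eq_iff)

lemma tscale_0: "tscale 0 x = x" by (simp add: tscale_def)

lemma tspan_scale: "x \<in> tspan S \<Longrightarrow> tscale c x \<in> tspan S"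
proof (induction x arbitrary: c rule: tspan.induct)
  case (gen x d) then show ?case by (simp add: tscale_tscale tspan.gen)
next
  case (sup x y) then show ?case by (simp add: tscale_tplus tspan.sup)
qed

lemma col_in_colspace: "col E k \<in> colspace E"
  unfolding colspace_def using tspan.gen[of "col E k" "range (col E)" 0] by (simp add: tscale_0)

lemma Max_range_max:
  "Max (range (\<lambda>k::'n::finite. max (f k) (g k :: real))) = max (Max (range f)) (Max (range g))"
proof (rule antisym)
  have "\<And>k. f k \<le> Max (range f)" "\<And>k. g k \<le> Max (range g)"
    by (rule Max_ge[OF _ rangeI], simp)+
  then show "Max (range (\<lambda>k. max (f k) (g k))) \<le> max (Max (range f)) (Max (range g))"
    by (intro Max.boundedI) (auto intro: max.mono)
  have "\<And>k. max (f k) (g k) \<le> Max (range (\<lambda>k. max (f k) (g k)))"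
    by (rule Max_ge[OF _ rangeI], simp)
  then show "max (Max (range f)) (Max (range g)) \<le> Max (range (\<lambda>k. max (f k) (g k)))"
    by (simp add: max.bounded_iff)
qed

lemma tmv_tplus: "tmv A (tplus x y) = tplus (tmv A x) (tmv A y)"
proof -
  have "\<And>i. (\<lambda>k. A i k + tplus x y k) = (\<lambda>k. max (A i k + x k) (A i k + y k))"
    by (auto simp: tplus_def fun_eq_iff max_def)
  then show ?thesis by (simp add: tmv_def tplus_def fun_eq_iff Max_range_max)
qed

lemma tmv_tscale: "tmv A (tscale c x) = tscale c (tmv A (x::'n::finite tvec))"
proof
  fix i
  have "tmv A (tscale c x) i = Max (range (\<lambda>k. (A i k + x k) + c))"
    by (simp add: tmv_def tscale_def add_ac)
  also have "\<dots> = Max (range (\<lambda>k. A i k + x k)) + c"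
    by (rule Max_add_commute) auto
  finally show "tmv A (tscale c x) i = tscale c (tmv A x) i"
    by (simp add: tmv_def tscale_def add_ac)
qed

lemma tmv_in_colspace: "tmv E x \<in> colspace E"
  unfolding tmv_comb
  by (rule comb_in) (auto simp: col_in_colspace[unfolded colspace_def] colspace_def tspan.sup tspan_scale)

lemma tmv_fix:
  assumes idem: "tmult E E = E" and x: "x \<in> colspace E"
  shows "tmv E x = x"
  using x unfolding colspace_def
proof (induction x rule: tspan.induct)
  case (gen x c)
  then obtain k where "x = col E k" by auto
  then show ?case by (simp add: tmv_tscale flip: col_tmult) (simp add: idem)
next
  case (sup x y) then show ?case by (simp add: tmv_tplus)
qed


lemma colspace_tplus: "x \<in> colspace E \<Longrightarrow> y \<in> colspace E \<Longrightarrow> tplus x y \<in> colspace E"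
  unfolding colspace_def by (rule tspan.sup)

lemma colspace_tscale: "x \<in> colspace E \<Longrightarrow> tscale c x \<in> colspace E"
  unfolding colspace_def by (rule tspan_scale)

lemma col_psi: "col (psi E f) j = f (col E j)"
  by (simp add: col_def psi_def)

lemma tAutD:
  assumes "f \<in> tAut M"
  shows "f \<in> extensional M" "bij_betw f M M"
    "\<And>x y. x \<in> M \<Longrightarrow> y \<in> M \<Longrightarrow> f (tplus x y) = tplus (f x) (f y)"
    "\<And>c x. x \<in> M \<Longrightarrow> f (tscale c x) = tscale c (f x)"
  using assms by (auto simp: tAut_def)

lemma aut_apply:
  assumes idem: "tmult E E = E" and f: "f \<in> tAut (colspace E)" and x: "x \<in> colspace E"
  shows "f x = tmv (psi E f) x"
proof -
  have "f x = f (comb UNIV x (col E))" using tmv_fix[OF idem x] by (simp add: tmv_comb)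
  also have "\<dots> = comb UNIV x (f \<circ> col E)"
    by (rule f_comb[where M="colspace E"]) (use f in \<open>auto simp: col_in_colspace colspace_tplus colspace_tscale tAut_def\<close>)
  also have "f \<circ> col E = col (psi E f)" by (simp add: fun_eq_iff col_psi)
  finally show ?thesis by (simp add: tmv_comb)
qed

lemma Hclass_char:
  assumes idem: "tmult E E = E"
  shows "A \<in> Hclass E \<longleftrightarrow> (tmult E A = A \<and> tmult A E = A \<and> (\<exists>Y. tmult A Y = E) \<and> (\<exists>Y. tmult Y A = E))"
proof
  assume "A \<in> Hclass E"
  hence R: "(A = E \<or> (\<exists>X. A = tmult E X)) \<and> (E = A \<or> (\<exists>Y. E = tmult A Y))"
    and L: "(A = E \<or> (\<exists>X. A = tmult X E)) \<and> (E = A \<or> (\<exists>Y. E = tmult Y A))"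
    by (auto simp: Hclass_def greenH_def greenR_def greenL_def)
  have 1: "tmult E A = A" using R idem by (metis tmult_assoc)
  have 2: "tmult A E = A" using L idem by (metis tmult_assoc)
  show "tmult E A = A \<and> tmult A E = A \<and> (\<exists>Y. tmult A Y = E) \<and> (\<exists>Y. tmult Y A = E)"
    using 1 2 R L idem by metis
next
  assume "tmult E A = A \<and> tmult A E = A \<and> (\<exists>Y. tmult A Y = E) \<and> (\<exists>Y. tmult Y A = E)"
  then show "A \<in> Hclass E"
    by (auto simp: Hclass_def greenH_def greenR_def greenL_def) metis+
qed


lemma group_Aut:
  assumes cp: "\<And>x y. x \<in> M \<Longrightarrow> y \<in> M \<Longrightarrow> tplus x y \<in> M"
    and cs: "\<And>c x. x \<in> M \<Longrightarrow> tscale c x \<in> M"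
  shows "group (AutGroup M)"
proof (rule groupI)
  fix f g assume f: "f \<in> carrier (AutGroup M)" and g: "g \<in> carrier (AutGroup M)"
  have fA: "f \<in> tAut M" and gA: "g \<in> tAut M" using f g by (auto simp: AutGroup_def)
  have gM: "\<And>x. x \<in> M \<Longrightarrow> g x \<in> M" using tAutD(2)[OF gA] by (simp add: bij_betw_apply)
  have "bij_betw (f \<circ> g) M M" using tAutD(2)[OF fA] tAutD(2)[OF gA] by (rule bij_betw_trans[rotated])
  hence "bij_betw (compose M f g) M M"
    by (rule bij_betw_cong[THEN iffD1, rotated]) (simp add: compose_def)
  moreover have "compose M f g (tplus x y) = tplus (compose M f g x) (compose M f g y)"
    if "x \<in> M" "y \<in> M" for x y
    using that cp gM tAutD(3)[OF fA] tAutD(3)[OF gA] by (simp add: compose_def)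
  moreover have "compose M f g (tscale c x) = tscale c (compose M f g x)"
    if "x \<in> M" for c x
    using that cs gM tAutD(4)[OF fA] tAutD(4)[OF gA] by (simp add: compose_def)
  ultimately show "f \<otimes>\<^bsub>AutGroup M\<^esub> g \<in> carrier (AutGroup M)"
    by (simp add: AutGroup_def tAut_def compose_extensional)
next
  have "bij_betw (restrict id M) M M"
    by (rule bij_betw_cong[THEN iffD1, of M id]) auto
  then show "\<one>\<^bsub>AutGroup M\<^esub> \<in> carrier (AutGroup M)"
    by (simp add: AutGroup_def tAut_def cp cs)
next
  fix f g h assume "f \<in> carrier (AutGroup M)" "g \<in> carrier (AutGroup M)" "h \<in> carrier (AutGroup M)"
  then have "h \<in> M \<rightarrow> M" by (auto simp: AutGroup_def tAut_def bij_betw_apply)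
  then show "f \<otimes>\<^bsub>AutGroup M\<^esub> g \<otimes>\<^bsub>AutGroup M\<^esub> h = f \<otimes>\<^bsub>AutGroup M\<^esub> (g \<otimes>\<^bsub>AutGroup M\<^esub> h)"
    by (simp add: AutGroup_def compose_assoc)
next
  fix f assume "f \<in> carrier (AutGroup M)"
  then have fA: "f \<in> tAut M" by (simp add: AutGroup_def)
  have gM: "\<And>x. x \<in> M \<Longrightarrow> f x \<in> M" using tAutD(2)[OF fA] by (simp add: bij_betw_apply)
  show "\<one>\<^bsub>AutGroup M\<^esub> \<otimes>\<^bsub>AutGroup M\<^esub> f = f"
  proof -
    have "compose M (restrict id M) f = f"
    proof
      fix x show "compose M (restrict id M) f x = f x"
        using gM tAutD(1)[OF fA] by (cases "x \<in> M") (auto simp: compose_def extensional_def)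
    qed
    then show ?thesis by (simp add: AutGroup_def)
  qed
  define g where "g = restrict (inv_into M f) M"
  have bij: "bij_betw f M M" by (rule tAutD(2)[OF fA])
  have inj: "inj_on f M" using bij by (simp add: bij_betw_def)
  have bg: "bij_betw g M M" unfolding g_def
    by (rule bij_betw_cong[THEN iffD1, OF _ bij_betw_inv_into[OF bij]]) auto
  have gf: "\<And>x. x \<in> M \<Longrightarrow> g (f x) = x" using inj gM by (simp add: g_def)
  have fg: "\<And>y. y \<in> M \<Longrightarrow> f (g y) = y" using bij
    by (simp add: g_def bij_betw_def f_inv_into_f)
  have gM2: "\<And>x. x \<in> M \<Longrightarrow> g x \<in> M" using bg by (simp add: bij_betw_apply)
  have "g (tplus x y) = tplus (g x) (g y)" if "x \<in> M" "y \<in> M" for x y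
  proof -
    have "tplus x y = f (tplus (g x) (g y))" using that gM2 fg tAutD(3)[OF fA] by simp
    then show ?thesis using gf gM2 that cp by simp
  qed
  moreover have "g (tscale c x) = tscale c (g x)" if "x \<in> M" for c x
  proof -
    have "tscale c x = f (tscale c (g x))" using that gM2 fg tAutD(4)[OF fA] by simp
    then show ?thesis using gf gM2 that cs by simp
  qed
  ultimately have gA: "g \<in> tAut M" using bg by (simp add: tAut_def g_def)
  have "compose M g f = restrict id M"
  proof
    fix x show "compose M g f x = restrict id M x"
      using gf by (cases "x \<in> M") (auto simp: compose_def)
  qed
  then show "\<exists>g\<in>carrier (AutGroup M). g \<otimes>\<^bsub>AutGroup M\<^esub> f = \<one>\<^bsub>AutGroup M\<^esub>"
    using gA by (auto simp: AutGroup_def)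
qed


lemma group_H:
  assumes idem: "tmult E E = E"
  shows "group (HGroup E)"
proof (rule groupI)
  fix A B assume "A \<in> carrier (HGroup E)" "B \<in> carrier (HGroup E)"
  then obtain Ya Za Yb Zb where a: "tmult E A = A" "tmult A E = A" "tmult A Ya = E" "tmult Za A = E"
    and b: "tmult E B = B" "tmult B E = B" "tmult B Yb = E" "tmult Zb B = E"
    by (auto simp: HGroup_def Hclass_char[OF idem])
  have 1: "tmult E (tmult A B) = tmult A B" by (simp add: a flip: tmult_assoc)
  have 2: "tmult (tmult A B) E = tmult A B" by (simp add: b tmult_assoc)
  have 3: "tmult (tmult A B) (tmult Yb Ya) = E"
  proof -
    have "tmult (tmult A B) (tmult Yb Ya) = tmult A (tmult (tmult B Yb) Ya)" by (simp add: tmult_assoc)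
    also have "\<dots> = E" by (simp add: b a flip: tmult_assoc)
    finally show ?thesis .
  qed
  have 4: "tmult (tmult Zb Za) (tmult A B) = E"
  proof -
    have "tmult (tmult Zb Za) (tmult A B) = tmult Zb (tmult (tmult Za A) B)" by (simp add: tmult_assoc)
    also have "\<dots> = E" by (simp add: b a)
    finally show ?thesis .
  qed
  show "A \<otimes>\<^bsub>HGroup E\<^esub> B \<in> carrier (HGroup E)"
    using 1 2 3 4 by (auto simp: HGroup_def Hclass_char[OF idem])
next
  show "\<one>\<^bsub>HGroup E\<^esub> \<in> carrier (HGroup E)"
    using idem by (auto simp: HGroup_def Hclass_char[OF idem])
next
  fix A B C show "A \<otimes>\<^bsub>HGroup E\<^esub> B \<otimes>\<^bsub>HGroup E\<^esub> C = A \<otimes>\<^bsub>HGroup E\<^esub> (B \<otimes>\<^bsub>HGroup E\<^esub> C)"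
    by (simp add: HGroup_def tmult_assoc)
next
  fix A assume "A \<in> carrier (HGroup E)"
  then show "\<one>\<^bsub>HGroup E\<^esub> \<otimes>\<^bsub>HGroup E\<^esub> A = A"
    by (auto simp: HGroup_def Hclass_char[OF idem])
next
  fix A assume "A \<in> carrier (HGroup E)"
  then obtain Y Z where a: "tmult E A = A" "tmult A E = A" "tmult A Y = E" "tmult Z A = E"
    by (auto simp: HGroup_def Hclass_char[OF idem])
  define A' where "A' = tmult E (tmult Y E)"
  have r: "tmult A A' = E"
  proof -
    have "tmult A A' = tmult (tmult (tmult A E) Y) E" by (simp add: A'_def tmult_assoc)
    also have "\<dots> = E" by (simp add: a idem)
    finally show ?thesis .
  qed
  have e1: "tmult E A' = A'" by (simp add: A'_def idem flip: tmult_assoc)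
  have e2: "tmult A' E = A'" by (simp add: A'_def idem tmult_assoc)
  have "tmult Z E = A'"
  proof -
    have "tmult Z E = tmult (tmult Z A) A'" by (simp add: r tmult_assoc)
    also have "\<dots> = A'" by (simp add: a e1)
    finally show ?thesis .
  qed
  hence l: "tmult A' A = E" using a by (metis tmult_assoc)
  have "A' \<in> Hclass E" using e1 e2 r l by (auto simp: Hclass_char[OF idem])
  then show "\<exists>B\<in>carrier (HGroup E). B \<otimes>\<^bsub>HGroup E\<^esub> A = \<one>\<^bsub>HGroup E\<^esub>"
    using l by (auto simp: HGroup_def)
qed


lemma group_AutC: "group (AutGroup (colspace E))"
  by (rule group_Aut) (auto simp: colspace_tplus colspace_tscale)

lemma aut_in: "f \<in> tAut M \<Longrightarrow> x \<in> M \<Longrightarrow> f x \<in> M"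
  by (rule bij_betw_apply[OF tAutD(2)])

lemma psi_mult:
  assumes idem: "tmult E E = E" and f: "f \<in> tAut (colspace E)" and g: "g \<in> tAut (colspace E)"
  shows "psi E (compose (colspace E) f g) = tmult (psi E f) (psi E g)"
proof (rule mat_eq_colI)
  fix j
  have "col (psi E (compose (colspace E) f g)) j = f (g (col E j))"
    by (simp add: col_psi compose_def col_in_colspace)
  also have "\<dots> = tmv (psi E f) (col (psi E g) j)"
    by (simp add: aut_apply[OF idem f] aut_in[OF g] col_in_colspace col_psi)
  finally show "col (psi E (compose (colspace E) f g)) j = col (tmult (psi E f) (psi E g)) j"
    by (simp add: col_tmult)
qed

lemma psi_one: "psi E (restrict id (colspace E)) = E"
  by (rule mat_eq_colI) (simp add: col_psi col_in_colspace)

lemma psi_in: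
  assumes idem: "tmult E E = E" and f: "f \<in> tAut (colspace E)"
  shows "psi E f \<in> Hclass E"
proof -
  interpret G: group "AutGroup (colspace E)" by (rule group_AutC)
  have fc: "f \<in> carrier (AutGroup (colspace E))" using f by (simp add: AutGroup_def)
  define g where "g = inv\<^bsub>AutGroup (colspace E)\<^esub> f"
  have gc: "g \<in> carrier (AutGroup (colspace E))" using fc by (simp add: g_def)
  hence g: "g \<in> tAut (colspace E)" by (simp add: AutGroup_def)
  have "g \<otimes>\<^bsub>AutGroup (colspace E)\<^esub> f = \<one>\<^bsub>AutGroup (colspace E)\<^esub>"
    "f \<otimes>\<^bsub>AutGroup (colspace E)\<^esub> g = \<one>\<^bsub>AutGroup (colspace E)\<^esub>"
    using fc by (simp_all add: g_def)
  hence c1: "compose (colspace E) g f = restrict id (colspace E)"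
    and c2: "compose (colspace E) f g = restrict id (colspace E)"
    by (simp_all add: AutGroup_def)
  have l: "tmult (psi E g) (psi E f) = E"
    using c1 psi_mult[OF idem g f] psi_one[of E] by simp
  have r: "tmult (psi E f) (psi E g) = E"
    using c2 psi_mult[OF idem f g] psi_one[of E] by simp
  have e1: "tmult E (psi E f) = psi E f"
    by (rule mat_eq_colI) (simp add: col_tmult col_psi tmv_fix[OF idem] aut_in[OF f] col_in_colspace)
  have e2: "tmult (psi E f) E = psi E f"
    by (rule mat_eq_colI) (simp add: col_tmult col_psi aut_apply[OF idem f] col_in_colspace)
  show ?thesis unfolding Hclass_char[OF idem] using e1 e2 l r by blast
qed

lemma psi_iso:
  assumes idem: "tmult E E = E"
  shows "psi E \<in> iso (AutGroup (colspace E)) (HGroup E)"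
proof (rule isoI)
  show "psi E \<in> hom (AutGroup (colspace E)) (HGroup E)"
    by (rule homI) (auto simp: AutGroup_def HGroup_def psi_in[OF idem] psi_mult[OF idem])
  have inj: "inj_on (psi E) (tAut (colspace E))"
  proof (rule inj_onI)
    fix f g assume f: "f \<in> tAut (colspace E)" and g: "g \<in> tAut (colspace E)" and eq: "psi E f = psi E g"
    show "f = g"
    proof (rule extensionalityI[OF tAutD(1)[OF f] tAutD(1)[OF g]])
      fix x assume "x \<in> colspace E"
      then show "f x = g x" using aut_apply[OF idem f] aut_apply[OF idem g] eq by simp
    qed
  qed
  have surj: "A \<in> psi E ` tAut (colspace E)" if A: "A \<in> Hclass E" for A
  proof -
    obtain Y Z where a: "tmult E A = A" "tmult A E = A" "tmult A Y = E" "tmult Z A = E"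
      using A by (auto simp: Hclass_char[OF idem])
    let ?M = "colspace E"
    define f where "f = restrict (tmv A) ?M"
    have inM: "tmv A x \<in> ?M" for x
      using tmv_in_colspace[of E "tmv A x"] by (simp add: a(1) flip: tmv_tmult)
    have inj: "inj_on (tmv A) ?M"
    proof (rule inj_onI)
      fix x y assume "x \<in> ?M" "y \<in> ?M" "tmv A x = tmv A y"
      moreover have "\<And>x. x \<in> ?M \<Longrightarrow> tmv Z (tmv A x) = x"
        by (simp add: a(4) tmv_fix[OF idem] flip: tmv_tmult)
      ultimately show "x = y" by metis
    qed
    have img: "tmv A ` ?M = ?M"
    proof
      show "tmv A ` ?M \<subseteq> ?M" using inM by auto
      show "?M \<subseteq> tmv A ` ?M"
      proof
        fix z assume z: "z \<in> ?M"
        have "z = tmv (tmult A Y) z" using tmv_fix[OF idem z] by (simp add: a(3))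
        also have "\<dots> = tmv (tmult A E) (tmv Y z)" by (simp add: a(2) tmv_tmult)
        also have "\<dots> = tmv A (tmv E (tmv Y z))" by (simp add: tmv_tmult)
        finally have "z = tmv A (tmv E (tmv Y z))" .
        then show "z \<in> tmv A ` ?M" using tmv_in_colspace by blast
      qed
    qed
    have "bij_betw (tmv A) ?M ?M" using inj img by (simp add: bij_betw_def)
    hence "bij_betw f ?M ?M" unfolding f_def by (rule bij_betw_cong[THEN iffD1, rotated]) simp
    hence fA: "f \<in> tAut ?M"
      by (simp add: tAut_def f_def tmv_tplus tmv_tscale colspace_tplus colspace_tscale)
    have "psi E f = A"
      by (rule mat_eq_colI) (simp add: col_psi f_def col_in_colspace a(2) flip: col_tmult)
    then show ?thesis using fA by blast
  qed
  have "psi E ` tAut (colspace E) = Hclass E" using psi_in[OF idem] surj by blast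
  then show "bij_betw (psi E) (carrier (AutGroup (colspace E))) (carrier (HGroup E))"
    using inj by (simp add: bij_betw_def AutGroup_def HGroup_def)
qed


lemma tr_tr[simp]: "tr (tr A) = A" by (simp add: tr_def)

lemma tr_tmult: "tr (tmult A B) = tmult (tr B) (tr A)"
  by (simp add: tmult_def tr_def add.commute)

lemma rowspace_tr: "rowspace E = colspace (tr E)"
proof -
  have "row E = col (tr E)" by (simp add: fun_eq_iff row_def col_def tr_def)
  then show ?thesis by (simp add: rowspace_def colspace_def)
qed

lemma Hclass_tr:
  assumes idem: "tmult E E = E" and A: "A \<in> Hclass E"
  shows "tr A \<in> Hclass (tr E)"
proof -
  have idem': "tmult (tr E) (tr E) = tr E" by (simp add: idem flip: tr_tmult)
  obtain Y Z where a: "tmult E A = A" "tmult A E = A" "tmult A Y = E" "tmult Z A = E"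
    using A unfolding Hclass_char[OF idem] by blast
  have "tmult (tr E) (tr A) = tr A" "tmult (tr A) (tr E) = tr A"
    "tmult (tr A) (tr Z) = tr E" "tmult (tr Y) (tr A) = tr E"
    by (simp_all add: a flip: tr_tmult)
  then show ?thesis unfolding Hclass_char[OF idem'] by blast
qed

lemma row_iso:
  assumes idem: "tmult E E = E"
  shows "\<exists>\<phi>. \<phi> \<in> iso (AutGroup (rowspace E)) (HGroup E)"
proof -
  have idem': "tmult (tr E) (tr E) = tr E" by (simp add: idem flip: tr_tmult)
  interpret G: group "HGroup E" by (rule group_H[OF idem])
  define chi where "chi = (\<lambda>B. inv\<^bsub>HGroup E\<^esub> (tr B))"
  have trH: "\<And>B. B \<in> Hclass (tr E) \<Longrightarrow> tr B \<in> Hclass E"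
    using Hclass_tr[OF idem'] by fastforce
  have "chi \<in> iso (HGroup (tr E)) (HGroup E)"
  proof (rule isoI)
    show "chi \<in> hom (HGroup (tr E)) (HGroup E)"
    proof (rule homI)
      fix B assume "B \<in> carrier (HGroup (tr E))"
      hence "tr B \<in> carrier (HGroup E)" using trH by (simp add: HGroup_def)
      then show "chi B \<in> carrier (HGroup E)" unfolding chi_def by (rule G.inv_closed)
    next
      fix B C assume B: "B \<in> carrier (HGroup (tr E))" and C: "C \<in> carrier (HGroup (tr E))"
      have B': "tr B \<in> carrier (HGroup E)" and C': "tr C \<in> carrier (HGroup E)"
        using B C trH by (auto simp: HGroup_def)
      have "chi (B \<otimes>\<^bsub>HGroup (tr E)\<^esub> C) = inv\<^bsub>HGroup E\<^esub> (tr C \<otimes>\<^bsub>HGroup E\<^esub> tr B)"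
        by (simp add: chi_def HGroup_def tr_tmult)
      also have "\<dots> = chi B \<otimes>\<^bsub>HGroup E\<^esub> chi C"
        using G.inv_mult_group[OF C' B'] by (simp add: chi_def)
      finally show "chi (B \<otimes>\<^bsub>HGroup (tr E)\<^esub> C) = chi B \<otimes>\<^bsub>HGroup E\<^esub> chi C" .
    qed
    have inj: "inj_on chi (Hclass (tr E))"
    proof (rule inj_onI)
      fix B C assume B: "B \<in> Hclass (tr E)" and C: "C \<in> Hclass (tr E)" and eq: "chi B = chi C"
      have B': "tr B \<in> carrier (HGroup E)" and C': "tr C \<in> carrier (HGroup E)"
        using B C trH by (auto simp: HGroup_def)
      have "tr B = tr C" using G.inv_inv[OF B'] G.inv_inv[OF C'] eq by (metis chi_def)
      then show "B = C" by (metis tr_tr)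
    qed
    have "chi ` Hclass (tr E) = Hclass E"
    proof
      show "chi ` Hclass (tr E) \<subseteq> Hclass E"
      proof
        fix A assume "A \<in> chi ` Hclass (tr E)"
        then obtain B where B: "B \<in> Hclass (tr E)" and A: "A = chi B" by blast
        have "tr B \<in> carrier (HGroup E)" using trH B by (simp add: HGroup_def)
        hence "chi B \<in> carrier (HGroup E)" unfolding chi_def by (rule G.inv_closed)
        then show "A \<in> Hclass E" using A by (simp add: HGroup_def)
      qed
      show "Hclass E \<subseteq> chi ` Hclass (tr E)"
      proof
        fix A assume A: "A \<in> Hclass E"
        hence Ac: "A \<in> carrier (HGroup E)" by (simp add: HGroup_def)
        have iA: "inv\<^bsub>HGroup E\<^esub> A \<in> Hclass E" using G.inv_closed[OF Ac] by (simp add: HGroup_def)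
        have "tr (inv\<^bsub>HGroup E\<^esub> A) \<in> Hclass (tr E)" by (rule Hclass_tr[OF idem iA])
        moreover have "chi (tr (inv\<^bsub>HGroup E\<^esub> A)) = A" using G.inv_inv[OF Ac] by (simp add: chi_def)
        ultimately show "A \<in> chi ` Hclass (tr E)" by (metis image_eqI)
      qed
    qed
    then show "bij_betw chi (carrier (HGroup (tr E))) (carrier (HGroup E))"
      using inj by (simp add: bij_betw_def HGroup_def)
  qed
  then have "chi \<circ> psi (tr E) \<in> iso (AutGroup (rowspace E)) (HGroup E)"
    using psi_iso[OF idem'] iso_set_trans by (metis rowspace_tr)
  then show ?thesis by blast
qed

theorem theorem3p4:
  fixes E :: "'n::finite tmat"
  assumes "tmult E E = E"
  shows "psi E \<in> tAut (colspace E) \<rightarrow> Hclass E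
    \<and> group (AutGroup (colspace E)) \<and> group (HGroup E)
    \<and> psi E \<in> iso (AutGroup (colspace E)) (HGroup E)
    \<and> (\<exists>\<phi>. \<phi> \<in> iso (AutGroup (rowspace E)) (HGroup E))"
  using psi_in[OF assms] group_AutC group_H[OF assms] psi_iso[OF assms] row_iso[OF assms]
  by blast

end
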